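(* Let $\mathscr C,J$ be as defined below. The isomorphism classes of points of the topos $\mathfrak{Sh}(\mathscr C,J)$ are in canonical bijection with the disjoint union of (a) the set of isomorphism classes of abstract (non-trivial) rank one totally ordered abelian groups $H$, via $H\mapsto\mathfrak{q}_H$, and (b) the set of non-trivial rank one subgroups $H\subset\mathbb{R}$, via $H\mapsto\mathfrak{p}_H$. Here $\mathfrak{p}_H$ is the point given by the flat continuous functor $F_H(V)=V\cap H\cap(0,\infty)$ (morphisms $n$ acting by multiplication by $n$), and $\mathfrak{q}_H$ is the point given by the flat continuous functor $F'_H$ with $F'_H(V)=\emptyset$ if $0\notin V$ and $F'_H(V)=H_+:=\{h\in H\mid h>0\}$ if $0\in V$ (morphisms $n$ acting by multiplication by $n$ on $H_+$). (This disjoint union is the set of points of the arithmetic site over $\mathbb{R}_+^{\max}$, i.e. the sector $\mathbb{Q}^\times\backslash\mathbb{A}_{\mathbb{Q}}/\hat{\mathbb{Z}}^*$ of the adele class space of $\mathbb{Q}$.)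
   Context: $\mathbb{N}^{\times}$ is the multiplicative monoid of positive integers. $\mathscr C$ is the small category whose objects are the (possibly empty) bounded open subintervals of $[0,\infty)$ (including intervals $[0,a)$), with $\mathrm{Hom}_{\mathscr C}(\Omega,\Omega')=\{n\in\mathbb{N}^{\times}\mid n\Omega\subset\Omega'\}$ for $\Omega\neq\emptyset$, $\mathrm{Hom}_{\mathscr C}(\emptyset,\Omega')$ a singleton, composition being multiplication. $J$ is the Grothendieck topology on $\mathscr C$ generated by ordinary open covers of intervals by subintervals; $\mathfrak{Sh}(\mathscr C,J)$ is equivalent to the topos of $\mathbb{N}^{\times}$-equivariant sheaves of sets on $[0,\infty)$, denoted $[0,\infty)\rtimes\mathbb{N}^{\times}$. Points of this topos correspond to flat (i.e. filtering) continuous (i.e. sending covers to jointly surjective families) functors $\mathscr C\to\mathfrak{Sets}$. A rank one group is one isomorphic to a non-zero subgroup of $\mathbb{Q}$; an abstract rank one ordered group is a totally ordered abelian group order-isomorphic to a non-zero subgroup of $\mathbb{Q}$. *)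

theory Defs
  imports Complex_Main
begin

definition obj :: "real set \<Rightarrow> bool" where
  "obj V \<longleftrightarrow> V = {} \<or> (\<exists>a b. 0 \<le> a \<and> a < b \<and> V = {a<..<b}) \<or> (\<exists>b. 0 < b \<and> V = {0..<b})"

definition mor :: "real set \<Rightarrow> real set \<Rightarrow> nat set" where
  "mor V W = (if V = {} then {1} else {n. 0 < n \<and> (\<lambda>x. real n * x) ` V \<subseteq> W})"

text \<open>Composition (m after n) of morphisms with source V: multiplication
  (on the singleton hom-sets out of the empty interval it is the unique morphism).\<close>
definition cmp :: "real set \<Rightarrow> nat \<Rightarrow> nat \<Rightarrow> nat" where
  "cmp V m n = (if V = {} then 1 else m * n)"

definition is_functor :: "(real set \<Rightarrow> 'a set) \<Rightarrow> (real set \<Rightarrow> real set \<Rightarrow> nat \<Rightarrow> 'a \<Rightarrow> 'a) \<Rightarrow> bool" where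
  "is_functor F Fm \<longleftrightarrow>
     (\<forall>V W n x. obj V \<and> obj W \<and> n \<in> mor V W \<and> x \<in> F V \<longrightarrow> Fm V W n x \<in> F W) \<and>
     (\<forall>V x. obj V \<and> x \<in> F V \<longrightarrow> Fm V V 1 x = x) \<and>
     (\<forall>U V W n m x. obj U \<and> obj V \<and> obj W \<and> n \<in> mor U V \<and> m \<in> mor V W \<and> x \<in> F U \<longrightarrow>
        Fm V W m (Fm U V n x) = Fm U W (cmp U m n) x)"

definition flat :: "(real set \<Rightarrow> 'a set) \<Rightarrow> (real set \<Rightarrow> real set \<Rightarrow> nat \<Rightarrow> 'a \<Rightarrow> 'a) \<Rightarrow> bool" where
  "flat F Fm \<longleftrightarrow>
     (\<exists>V. obj V \<and> F V \<noteq> {}) \<and>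
     (\<forall>V W x y. obj V \<and> obj W \<and> x \<in> F V \<and> y \<in> F W \<longrightarrow>
        (\<exists>U z u v. obj U \<and> z \<in> F U \<and> u \<in> mor U V \<and> v \<in> mor U W \<and>
                   Fm U V u z = x \<and> Fm U W v z = y)) \<and>
     (\<forall>V W u v x. obj V \<and> obj W \<and> u \<in> mor V W \<and> v \<in> mor V W \<and> x \<in> F V \<and>
                  Fm V W u x = Fm V W v x \<longrightarrow>
        (\<exists>U z w. obj U \<and> z \<in> F U \<and> w \<in> mor U V \<and> Fm U V w z = x \<and>
                 cmp U u w = cmp U v w))"

text \<open>Continuity: ordinary open covers of an interval by subintervals (inclusion
  morphisms, i.e. n = 1) are sent to jointly surjective families.\<close>
definition continuous_functor :: "(real set \<Rightarrow> 'a set) \<Rightarrow> (real set \<Rightarrow> real set \<Rightarrow> nat \<Rightarrow> 'a \<Rightarrow> 'a) \<Rightarrow> bool" where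
  "continuous_functor F Fm \<longleftrightarrow>
     (\<forall>V S. obj V \<and> (\<forall>W\<in>S. obj W \<and> W \<subseteq> V) \<and> \<Union>S = V \<longrightarrow>
        (\<forall>x\<in>F V. \<exists>W\<in>S. \<exists>y\<in>F W. Fm W V 1 y = x))"

definition flat_continuous :: "(real set \<Rightarrow> 'a set) \<Rightarrow> (real set \<Rightarrow> real set \<Rightarrow> nat \<Rightarrow> 'a \<Rightarrow> 'a) \<Rightarrow> bool" where
  "flat_continuous F Fm \<longleftrightarrow> is_functor F Fm \<and> flat F Fm \<and> continuous_functor F Fm"

definition nat_iso :: "(real set \<Rightarrow> 'a set) \<Rightarrow> (real set \<Rightarrow> real set \<Rightarrow> nat \<Rightarrow> 'a \<Rightarrow> 'a) \<Rightarrow>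
                       (real set \<Rightarrow> 'b set) \<Rightarrow> (real set \<Rightarrow> real set \<Rightarrow> nat \<Rightarrow> 'b \<Rightarrow> 'b) \<Rightarrow> bool" where
  "nat_iso F Fm G Gm \<longleftrightarrow>
     (\<exists>\<eta>. (\<forall>V. obj V \<longrightarrow> bij_betw (\<eta> V) (F V) (G V)) \<and>
          (\<forall>V W n x. obj V \<and> obj W \<and> n \<in> mor V W \<and> x \<in> F V \<longrightarrow>
              \<eta> W (Fm V W n x) = Gm V W n (\<eta> V x)))"

definition add_subgroup :: "'a::ab_group_add set \<Rightarrow> bool" where
  "add_subgroup H \<longleftrightarrow> 0 \<in> H \<and> (\<forall>x\<in>H. \<forall>y\<in>H. x + y \<in> H) \<and> (\<forall>x\<in>H. - x \<in> H)"

text \<open>Non-zero subgroups of Q: representatives of abstract rank one ordered groups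
  (with the order induced from Q).\<close>
definition rank_one_rat :: "rat set \<Rightarrow> bool" where
  "rank_one_rat H \<longleftrightarrow> add_subgroup H \<and> H \<noteq> {0}"

definition ord_group_iso :: "rat set \<Rightarrow> rat set \<Rightarrow> bool" where
  "ord_group_iso H K \<longleftrightarrow> (\<exists>f. bij_betw f H K \<and> (\<forall>x\<in>H. \<forall>y\<in>H. f (x + y) = f x + f y) \<and>
                              (\<forall>x\<in>H. \<forall>y\<in>H. x < y \<longrightarrow> f x < f y))"

definition rank_one_real :: "real set \<Rightarrow> bool" where
  "rank_one_real H \<longleftrightarrow> add_subgroup H \<and> H \<noteq> {0} \<and>
     (\<exists>K. rank_one_rat K \<and> (\<exists>f. bij_betw f H K \<and> (\<forall>x\<in>H. \<forall>y\<in>H. f (x + y) = f x + f y)))"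

definition FH :: "real set \<Rightarrow> real set \<Rightarrow> real set" where
  "FH H V = V \<inter> H \<inter> {0<..}"

definition FHm :: "real set \<Rightarrow> real set \<Rightarrow> nat \<Rightarrow> real \<Rightarrow> real" where
  "FHm V W n x = real n * x"

definition F'H :: "rat set \<Rightarrow> real set \<Rightarrow> rat set" where
  "F'H H V = (if 0 \<in> V then {h\<in>H. h > 0} else {})"

definition F'Hm :: "real set \<Rightarrow> real set \<Rightarrow> nat \<Rightarrow> rat \<Rightarrow> rat" where
  "F'Hm V W n x = of_nat n * x"

end

theory Submission
  imports Defs
begin



lemma sg_mult_nat: fixes H :: "'a::ring_1 set"
  assumes "add_subgroup H" "x \<in> H" shows "of_nat n * x \<in> H"
  using assms unfolding add_subgroup_def by (induction n) (auto simp: algebra_simps)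

lemma sg_mult_int: fixes H :: "'a::ring_1 set"
  assumes "add_subgroup H" "x \<in> H" shows "of_int i * x \<in> H"
proof (cases "i \<ge> 0")
  case True
  then have "of_int i * x = of_nat (nat i) * x" by simp
  then show ?thesis using sg_mult_nat assms by metis
next
  case False
  then have "of_int i * x = - (of_nat (nat (-i)) * x)" by simp
  then show ?thesis using sg_mult_nat assms unfolding add_subgroup_def by metis
qed

lemma commens:
  fixes H :: "'a::linordered_field set"
  assumes H: "add_subgroup H" and xy: "x \<in> H" "y \<in> H" "x > 0" "y > 0" and km: "(k::int) > 0" "m > 0"
    and e: "of_int k * x = of_int m * y"
  shows "\<exists>z\<in>H. z > 0 \<and> (\<exists>a b::nat. a > 0 \<and> b > 0 \<and> x = of_nat a * z \<and> y = of_nat b * z)"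
proof -
  define g where "g = gcd m k"
  obtain u v where uv: "u*m + v*k = g" using bezout_int[of m k] g_def by metis
  obtain m' where m': "m = g*m'" using g_def by (meson gcd_dvd1 dvdE)
  obtain k' where k': "k = g*k'" using g_def by (meson gcd_dvd2 dvdE)
  have g: "g > 0" using km g_def by simp
  have pos: "m' > 0" "k' > 0" using m' k' g km by (auto simp: zero_less_mult_iff)
  define z where "z = of_int u * x + of_int v * y"
  have zH: "z \<in> H" unfolding z_def using sg_mult_int H xy unfolding add_subgroup_def by metis
  have "of_int m * z = of_int u * (of_int m * x) + of_int v * (of_int m * y)"
    unfolding z_def by (simp add: algebra_simps)
  also have "\<dots> = of_int u * (of_int m * x) + of_int v * (of_int k * x)" using e by simp
  also have "\<dots> = of_int (u*m + v*k) * x" by (simp add: algebra_simps)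
  finally have mz: "of_int m * z = of_int g * x" using uv by simp
  then have "of_int g * (of_int m' * z) = of_int g * x" using m' by (simp add: algebra_simps)
  then have xz: "x = of_int m' * z" using g by simp
  have "of_int g * (of_int m' * y) = of_int g * (of_int m' * (of_int k' * z))"
    using e m' k' xz by (simp add: algebra_simps) (metis mult.commute)
  then have yz: "y = of_int k' * z" using g pos by simp
  have z0: "z > 0" using xz xy pos by (metis of_int_pos zero_less_mult_iff not_less_iff_gr_or_eq)
  have "x = of_nat (nat m') * z" "y = of_nat (nat k') * z" using xz yz pos by simp_all
  then show ?thesis using zH z0 pos by (metis zero_less_nat_eq)
qed


lemma add_hom_0: fixes f :: "'a::ring_1 \<Rightarrow> 'b::ring_1"
  assumes "add_subgroup H" "\<forall>x\<in>H. \<forall>y\<in>H. f (x + y) = f x + f y" shows "f 0 = 0"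
proof -
  have "0 \<in> H" using assms unfolding add_subgroup_def by auto
  then have "f (0 + 0) = f 0 + f 0" using assms by blast
  then show ?thesis by simp
qed

lemma add_hom_nat: fixes f :: "'a::ring_1 \<Rightarrow> 'b::ring_1"
  assumes H: "add_subgroup H" and f: "\<forall>x\<in>H. \<forall>y\<in>H. f (x + y) = f x + f y" and x: "x \<in> H"
  shows "f (of_nat n * x) = of_nat n * f x"
proof (induction n)
  case 0 then show ?case using add_hom_0[OF H f] by simp
next
  case (Suc n)
  have "of_nat n * x \<in> H" using sg_mult_nat H x by blast
  then have "f (x + of_nat n * x) = f x + f (of_nat n * x)" using f x by blast
  then show ?case using Suc by (simp add: algebra_simps)
qed

lemma add_hom_neg: fixes f :: "'a::ring_1 \<Rightarrow> 'b::ring_1"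
  assumes H: "add_subgroup H" and f: "\<forall>x\<in>H. \<forall>y\<in>H. f (x + y) = f x + f y" and x: "x \<in> H"
  shows "f (- x) = - f x"
proof -
  have "-x \<in> H" using H x unfolding add_subgroup_def by auto
  then have "f (-x + x) = f (-x) + f x" using f x by blast
  then show ?thesis using add_hom_0[OF H f] by (simp add: eq_neg_iff_add_eq_0)
qed

lemma add_hom_int: fixes f :: "'a::ring_1 \<Rightarrow> 'b::ring_1"
  assumes H: "add_subgroup H" and f: "\<forall>x\<in>H. \<forall>y\<in>H. f (x + y) = f x + f y" and x: "x \<in> H"
  shows "f (of_int i * x) = of_int i * f x"
proof (cases "i \<ge> 0")
  case True
  then have "of_int i * x = of_nat (nat i) * x" "(of_int i :: 'b) * f x = of_nat (nat i) * f x" by simp_all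
  then show ?thesis using add_hom_nat[OF H f x] by metis
next
  case False
  have "of_nat (nat (-i)) * x \<in> H" using sg_mult_nat H x by blast
  moreover have "of_int i * x = - (of_nat (nat (-i)) * x)" "(of_int i :: 'b) * f x = - (of_nat (nat (-i)) * f x)" using False by simp_all
  ultimately show ?thesis using add_hom_nat[OF H f x] add_hom_neg[OF H f] by metis
qed

lemma commens_rat: fixes K :: "rat set"
  assumes "add_subgroup K" "x \<in> K" "y \<in> K" "x > 0" "y > 0"
  shows "\<exists>z\<in>K. z > 0 \<and> (\<exists>a b::nat. a > 0 \<and> b > 0 \<and> x = of_nat a * z \<and> y = of_nat b * z)"
proof -
  obtain p q where pq: "quotient_of (x/y) = (p, q)" by (cases "quotient_of (x/y)") auto
  have q: "q > 0" using quotient_of_denom_pos[OF pq] .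
  have e: "x / y = of_int p / of_int q" using quotient_of_div[OF pq] .
  have "x / y > 0" using assms by simp
  then have p: "p > 0" using e q by (simp add: zero_less_divide_iff)
  have "of_int q * x = of_int p * y" using e q assms(5) by (simp add: field_simps)
  then show ?thesis using commens[OF assms(1-5) q p] by blast
qed

lemma commens_real: fixes H :: "real set"
  assumes R: "rank_one_real H" and xy: "x \<in> H" "y \<in> H" "x > 0" "y > 0"
  shows "\<exists>z\<in>H. z > 0 \<and> (\<exists>a b::nat. a > 0 \<and> b > 0 \<and> x = of_nat a * z \<and> y = of_nat b * z)"
proof -
  have H: "add_subgroup H" using R rank_one_real_def by auto
  obtain K f where K: "rank_one_rat K" "bij_betw f H K" and f: "\<forall>x\<in>H. \<forall>y\<in>H. f (x + y) = f x + f y"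
    using R unfolding rank_one_real_def by blast
  have inj: "inj_on f H" using K bij_betw_def by auto
  have f0: "f 0 = 0" using add_hom_0[OF H f] .
  have h0: "0 \<in> H" using H add_subgroup_def by auto
  have fy: "f y \<noteq> 0" using inj xy h0 f0 unfolding inj_on_def by (metis less_irrefl)
  obtain p q where pq: "quotient_of (f x / f y) = (p, q)" by (cases "quotient_of (f x / f y)") auto
  have q: "q > 0" using quotient_of_denom_pos[OF pq] .
  have e: "f x / f y = of_int p / of_int q" using quotient_of_div[OF pq] .
  have "of_int q * f x = of_int p * f y" using e q fy by (simp add: field_simps)
  then have "f (of_int q * x) = f (of_int p * y)" using add_hom_int[OF H f] xy by simp
  moreover have "of_int q * x \<in> H" "of_int p * y \<in> H" using sg_mult_int H xy by auto
  ultimately have e2: "of_int q * x = of_int p * y" using inj unfolding inj_on_def by blast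
  have "of_int q * x > (0::real)" using q xy by simp
  then have "of_int p * y > (0::real)" using e2 by simp
  then have p: "p > 0" using xy by (simp add: zero_less_mult_iff)
  show ?thesis using commens[OF H xy q p e2] .
qed

definition sgP :: "'a::linordered_ab_group_add set \<Rightarrow> 'a set" where
  "sgP P = P \<union> uminus ` P \<union> {0}"

lemma sgP_sub: fixes P :: "'a::linordered_ab_group_add set"
  assumes pos: "\<And>x. x \<in> P \<Longrightarrow> x > 0" and add: "\<And>x y. x \<in> P \<Longrightarrow> y \<in> P \<Longrightarrow> x + y \<in> P"
    and dif: "\<And>x y. x \<in> P \<Longrightarrow> y \<in> P \<Longrightarrow> y < x \<Longrightarrow> x - y \<in> P"
  shows "add_subgroup (sgP P)"
proof -
  have mix: "x + - y \<in> sgP P" if "x \<in> P" "y \<in> P" for x y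
  proof -
    consider "y < x" | "y = x" | "x < y" by fastforce
    then show ?thesis
    proof cases
      case 1 then show ?thesis using dif that unfolding sgP_def by auto
    next
      case 2 then show ?thesis unfolding sgP_def by auto
    next
      case 3 then have "y - x \<in> P" using dif that by auto
      then have "- (y - x) \<in> sgP P" unfolding sgP_def by blast
      then show ?thesis by (simp add: algebra_simps)
    qed
  qed
  have "x + y \<in> sgP P" if "x \<in> sgP P" "y \<in> sgP P" for x y
  proof -
    from that consider "x \<in> P" "y \<in> P" | x' where "x \<in> P" "y = - x'" "x' \<in> P"
      | x' where "x = -x'" "x' \<in> P" "y \<in> P" | x' y' where "x = -x'" "y = -y'" "x' \<in> P" "y' \<in> P"
      | "x = 0" | "y = 0" unfolding sgP_def by blast
    then show ?thesis
    proof cases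
      case 1 then show ?thesis using add unfolding sgP_def by auto
    next
      case (2 x') then show ?thesis using mix by auto
    next
      case (3 x') then show ?thesis using mix[of y x'] by (simp add: add.commute)
    next
      case (4 x' y') then have "x + y = - (x' + y')" by simp
      then show ?thesis using add 4 unfolding sgP_def by blast
    qed (use that in auto)
  qed
  moreover have "- x \<in> sgP P" if "x \<in> sgP P" for x using that unfolding sgP_def by auto
  ultimately show ?thesis unfolding add_subgroup_def sgP_def by auto
qed

lemma sgP_pos: fixes P :: "'a::linordered_ab_group_add set"
  assumes pos: "\<And>x. x \<in> P \<Longrightarrow> x > 0"
  shows "x \<in> sgP P \<and> x > 0 \<longleftrightarrow> x \<in> P"
  using pos unfolding sgP_def by (auto, fastforce)

lemma sg_eq_pos: fixes H :: "'a::linordered_ab_group_add set"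
  assumes "add_subgroup H" "add_subgroup K" "\<And>h. h > 0 \<Longrightarrow> h \<in> H \<longleftrightarrow> h \<in> K"
  shows "H = K"
proof -
  have "h \<in> K" if "add_subgroup H" "add_subgroup K" "\<And>h. h > 0 \<Longrightarrow> h \<in> H \<longleftrightarrow> h \<in> K" "h \<in> H" for H K :: "'a set" and h
  proof -
    consider "h > 0" | "h = 0" | "h < 0" by fastforce
    then show ?thesis
    proof cases
      case 3 then have "-h \<in> H" "-h > 0" using that unfolding add_subgroup_def by auto
      then have "-h \<in> K" using that by blast
      then show ?thesis using that(2) unfolding add_subgroup_def by force
    qed (use that add_subgroup_def in auto)
  qed
  then show ?thesis using assms by blast
qed



lemma ext_pos: fixes H K :: "rat set"
  assumes H: "add_subgroup H" and K: "add_subgroup K"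
    and fb: "bij_betw f {h\<in>H. h > 0} {k\<in>K. k > 0}"
    and fa: "\<And>x y. x \<in> H \<Longrightarrow> y \<in> H \<Longrightarrow> x > 0 \<Longrightarrow> y > 0 \<Longrightarrow> f (x + y) = f x + f y"
  shows "ord_group_iso H K"
proof -
  define g where "g h = (if h > 0 then f h else if h = 0 then 0 else - f (-h))" for h
  have fm: "f x \<in> K" "f x > 0" if "x \<in> H" "x > 0" for x using fb that unfolding bij_betw_def by auto
  have Hn: "-x \<in> H" if "x \<in> H" for x using H that unfolding add_subgroup_def by blast
  have Ha: "x + y \<in> H" if "x \<in> H" "y \<in> H" for x y using H that unfolding add_subgroup_def by blast
  have mix: "g (x + y) = g x + g y" if "x \<in> H" "y \<in> H" "x > 0" "y < 0" for x y
  proof -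
    consider "x + y > 0" | "x + y = 0" | "x + y < 0" by fastforce
    then show ?thesis
    proof cases
      case 1
      have "f ((x+y) + (-y)) = f (x+y) + f (-y)" using fa[of "x+y" "-y"] 1 that Ha Hn by auto
      then show ?thesis using 1 that unfolding g_def by auto
    next
      case 2 then have "y = -x" by (simp add: add_eq_0_iff2)
      then show ?thesis using that unfolding g_def by auto
    next
      case 3
      have m: "-(x+y) \<in> H" using Ha Hn that by blast
      have "f (-(x+y) + x) = f (-(x+y)) + f x" using fa[OF m that(1)] 3 that by linarith
      then show ?thesis using 3 that unfolding g_def by auto
    qed
  qed
  have gadd: "g (x + y) = g x + g y" if "x \<in> H" "y \<in> H" for x y
  proof -
    consider "x = 0" | "y = 0" | "x > 0" "y > 0" | "x > 0" "y < 0" | "x < 0" "y > 0" | "x < 0" "y < 0"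
      by fastforce
    then show ?thesis
    proof cases
      case 3 then show ?thesis using fa that unfolding g_def by auto
    next
      case 4 then show ?thesis using mix that by auto
    next
      case 5 then show ?thesis using mix[of y x] that by (simp add: add.commute)
    next
      case 6
      have "f (-x + -y) = f (-x) + f (-y)" using fa[of "-x" "-y"] 6 that Hn by auto
      then show ?thesis using 6 unfolding g_def by auto
    qed (auto simp: g_def)
  qed
  have gmono: "g x < g y" if "x \<in> H" "y \<in> H" "x < y" for x y
  proof -
    have "y + - x \<in> H" using Ha Hn that by blast
    then have d: "y - x \<in> H" "y - x > 0" using that by simp_all
    have "g y = g (x + (y - x))" by simp
    also have "\<dots> = g x + g (y - x)" using gadd that d by blast
    finally show ?thesis using fm[OF d] d unfolding g_def by auto
  qed
  have gK: "g x \<in> K" if "x \<in> H" for x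
    using that fm[of x] fm[of "-x"] Hn K unfolding g_def add_subgroup_def by auto
  have gsurj: "k \<in> g ` H" if kK: "k \<in> K" for k
  proof -
    consider "k > 0" | "k = 0" | "k < 0" by fastforce
    then show ?thesis
    proof cases
      case 1 then have "k \<in> f ` {h\<in>H. h > 0}" using fb kK unfolding bij_betw_def by auto
      then obtain h where "h \<in> H" "h > 0" "f h = k" by auto
      then show ?thesis unfolding g_def by force
    next
      case 2 then show ?thesis using H unfolding g_def add_subgroup_def by force
    next
      case 3 then have "-k \<in> K" "-k > 0" using K kK unfolding add_subgroup_def by auto
      then have "-k \<in> f ` {h\<in>H. h > 0}" using fb unfolding bij_betw_def by auto
      then obtain h where h: "h \<in> H" "h > 0" "f h = -k" by auto
      then have "g (-h) = k" unfolding g_def by auto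
      then show ?thesis using Hn h by force
    qed
  qed
  have "inj_on g H" unfolding inj_on_def using gmono by (metis linorder_neq_iff less_irrefl)
  then have "bij_betw g H K" unfolding bij_betw_def using gK gsurj by auto
  then show ?thesis unfolding ord_group_iso_def using gadd gmono by blast
qed



lemma obj_nonneg: "obj V \<Longrightarrow> x \<in> V \<Longrightarrow> 0 \<le> x"
  unfolding obj_def by auto

lemma obj_bounded: "obj V \<Longrightarrow> \<exists>B>0. V \<subseteq> {0..<B}"
  unfolding obj_def
  apply (elim disjE exE conjE)
    apply (rule exI[of _ 1]; simp)
   apply (rule_tac x=b in exI; auto)
  apply (rule_tac x=b in exI; auto)
  done

lemma obj_ioo: "0 \<le> a \<Longrightarrow> obj {a<..<b}"
  unfolding obj_def by (cases "a < b") auto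

lemma obj_ico: "obj {0..<b}"
  unfolding obj_def by (cases "0 < b") auto

lemma obj_inter: assumes "obj V" "obj W" shows "obj (V \<inter> W)"
proof -
  have e: "\<And>a b c d::real. {a<..<b} \<inter> {c<..<d} = {max a c<..<min b d}" by auto
  have e2: "\<And>a b d::real. 0 \<le> a \<Longrightarrow> {a<..<b} \<inter> {0..<d} = {a<..<min b d}" by auto
  have e3: "\<And>a b d::real. 0 \<le> a \<Longrightarrow> {0..<d} \<inter> {a<..<b} = {a<..<min b d}" by auto
  have e4: "\<And>b d::real. {0..<b} \<inter> {0..<d} = {0..<min b d}" by auto
  show ?thesis using assms unfolding obj_def[of V] obj_def[of W]
    apply (elim disjE exE conjE)
    by (simp_all add: e e2 e3 e4 obj_ioo obj_ico obj_def[of "{}"])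
qed

lemma obj_pre: assumes "obj V" "t > 0" shows "obj {x. t * x \<in> V}"
proof -
  have e: "\<And>a b. {x. t * x \<in> {a<..<b}} = {a/t<..<b/t}" using assms(2)
    by (auto simp: field_simps)
  have e2: "\<And>b. {x. t * x \<in> {0..<b}} = {0..<b/t}" using assms(2)
    by (auto simp: field_simps zero_le_mult_iff)
  from assms(1) consider "V = {}" | a b where "0 \<le> a" "V = {a<..<b}" | b where "V = {0..<b}"
    unfolding obj_def by blast
  then show ?thesis
  proof cases
    case 1 then show ?thesis by (simp add: obj_def)
  next
    case (2 a b) then show ?thesis using e[of a b] assms(2) by (simp add: obj_ioo del: greaterThanLessThan_iff)
  next
    case (3 b) then show ?thesis using e2[of b] by (simp add: obj_ico del: atLeastLessThan_iff)
  qed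
qed

lemma obj_nb: assumes "0 \<le> c" "0 < e" shows "obj {x. 0 \<le> x \<and> \<bar>x - c\<bar> < e}"
proof (cases "c - e < 0")
  case True
  then have "{x. 0 \<le> x \<and> \<bar>x - c\<bar> < e} = {0..<c+e}" by auto
  then show ?thesis by (simp add: obj_ico)
next
  case False
  then have "{x. 0 \<le> x \<and> \<bar>x - c\<bar> < e} = {c-e<..<c+e}" using assms by auto
  then show ?thesis using False by (simp add: obj_ioo)
qed

lemma mor_ne: "V \<noteq> {} \<Longrightarrow> n \<in> mor V W \<longleftrightarrow> 0 < n \<and> (\<lambda>x. real n * x) ` V \<subseteq> W"
  unfolding mor_def by simp

lemma mor_comp: "U \<noteq> {} \<Longrightarrow> a \<in> mor U V \<Longrightarrow> n \<in> mor V W \<Longrightarrow> n * a \<in> mor U W"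
proof -
  assume U: "U \<noteq> {}" and a: "a \<in> mor U V" and n: "n \<in> mor V W"
  then have a': "0 < a" "(\<lambda>x. real a * x) ` U \<subseteq> V" using mor_ne by auto
  then have "V \<noteq> {}" using U by auto
  then have n': "0 < n" "(\<lambda>x. real n * x) ` V \<subseteq> W" using n mor_ne by auto
  have "(\<lambda>x. real (n*a) * x) ` U \<subseteq> W"
  proof
    fix y assume "y \<in> (\<lambda>x. real (n*a) * x) ` U"
    then obtain x where x: "x \<in> U" "y = real (n*a) * x" by auto
    then have "real a * x \<in> V" using a' by auto
    then have "real n * (real a * x) \<in> W" using n' by auto
    then show "y \<in> W" using x by (simp add: mult.assoc)
  qed
  then show ?thesis using U a' n' mor_ne by auto
qed

lemma mor_incl: "V \<noteq> {} \<Longrightarrow> V \<subseteq> W \<Longrightarrow> 1 \<in> mor V W"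
  unfolding mor_def by auto

locale fc =
  fixes F :: "real set \<Rightarrow> 'a set" and Fm :: "real set \<Rightarrow> real set \<Rightarrow> nat \<Rightarrow> 'a \<Rightarrow> 'a"
  assumes fcF: "flat_continuous F Fm"
begin

lemma isf: "is_functor F Fm" and fl: "flat F Fm" and ct: "continuous_functor F Fm"
  using fcF unfolding flat_continuous_def by auto

lemma F_empty: "F {} = {}"
proof -
  have "obj {}" by (simp add: obj_def)
  then have "\<forall>x\<in>F {}. \<exists>W\<in>{}. \<exists>y\<in>F W. Fm W {} 1 y = x"
    using ct unfolding continuous_functor_def by (metis Sup_empty empty_iff)
  then show ?thesis by auto
qed

lemma F_ne: "x \<in> F V \<Longrightarrow> V \<noteq> {}"
  using F_empty by auto

lemma Fm_in: "obj V \<Longrightarrow> obj W \<Longrightarrow> n \<in> mor V W \<Longrightarrow> x \<in> F V \<Longrightarrow> Fm V W n x \<in> F W"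
  using isf unfolding is_functor_def by blast

lemma Fm_id: "obj V \<Longrightarrow> x \<in> F V \<Longrightarrow> Fm V V 1 x = x"
  using isf unfolding is_functor_def by blast

lemma Fm_comp: assumes "obj U" "obj V" "obj W" "n \<in> mor U V" "m \<in> mor V W" "x \<in> F U"
  shows "Fm V W m (Fm U V n x) = Fm U W (m * n) x"
proof -
  have "Fm V W m (Fm U V n x) = Fm U W (cmp U m n) x" using isf assms unfolding is_functor_def by blast
  moreover have "U \<noteq> {}" using F_ne assms(6) by auto
  ultimately show ?thesis unfolding cmp_def by simp
qed

lemma eqmor: assumes "obj U" "obj W" "m \<in> mor U W" "n \<in> mor U W" "z \<in> F U"
    "Fm U W m z = Fm U W n z" shows "m = n"
proof -
  obtain U' z' w where "obj U'" "z' \<in> F U'" "w \<in> mor U' U" "cmp U' m w = cmp U' n w"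
    using fl assms unfolding flat_def by metis
  moreover then have "U' \<noteq> {}" using F_ne by auto
  ultimately show ?thesis unfolding cmp_def using mor_ne by auto
qed

lemma common: "obj V \<Longrightarrow> obj W \<Longrightarrow> x \<in> F V \<Longrightarrow> y \<in> F W \<Longrightarrow>
   \<exists>U z u v. obj U \<and> z \<in> F U \<and> u \<in> mor U V \<and> v \<in> mor U W \<and> Fm U V u z = x \<and> Fm U W v z = y"
  using fl unfolding flat_def by blast

definition loc :: "real set \<Rightarrow> 'a \<Rightarrow> real \<Rightarrow> bool" where
  "loc V \<xi> c \<longleftrightarrow> c \<in> V \<and> (\<forall>W. obj W \<and> c \<in> W \<and> W \<subseteq> V \<longrightarrow> (\<exists>y\<in>F W. Fm W V 1 y = \<xi>))"

lemma loc_ex: assumes "obj V" "\<xi> \<in> F V" shows "\<exists>c. loc V \<xi> c"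
proof (rule ccontr)
  assume "\<nexists>c. loc V \<xi> c"
  then have "\<forall>c\<in>V. \<exists>W. obj W \<and> c \<in> W \<and> W \<subseteq> V \<and> \<not>(\<exists>y\<in>F W. Fm W V 1 y = \<xi>)"
    unfolding loc_def by blast
  then have "\<exists>Wf. \<forall>c\<in>V. obj (Wf c) \<and> c \<in> Wf c \<and> Wf c \<subseteq> V \<and> \<not>(\<exists>y\<in>F (Wf c). Fm (Wf c) V 1 y = \<xi>)"
    by (rule bchoice)
  then obtain Wf where Wf: "\<forall>c\<in>V. obj (Wf c) \<and> c \<in> Wf c \<and> Wf c \<subseteq> V \<and> \<not>(\<exists>y\<in>F (Wf c). Fm (Wf c) V 1 y = \<xi>)"
    by blast
  let ?S = "Wf ` V"
  have h1: "\<forall>W\<in>?S. obj W \<and> W \<subseteq> V" using Wf by auto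
  have h2: "\<Union>?S = V" using Wf by blast
  have "\<forall>V S. obj V \<and> (\<forall>W\<in>S. obj W \<and> W \<subseteq> V) \<and> \<Union>S = V \<longrightarrow>
        (\<forall>x\<in>F V. \<exists>W\<in>S. \<exists>y\<in>F W. Fm W V 1 y = x)" using ct unfolding continuous_functor_def .
  then have "\<forall>x\<in>F V. \<exists>W\<in>?S. \<exists>y\<in>F W. Fm W V 1 y = x" using h1 h2 assms(1) by blast
  then have "\<exists>W\<in>?S. \<exists>y\<in>F W. Fm W V 1 y = \<xi>" using assms(2) by blast
  then show False using Wf by blast
qed

lemma loc_unique: assumes "obj V" "\<xi> \<in> F V" "loc V \<xi> c" "loc V \<xi> d" shows "c = d"
proof (rule ccontr)
  assume cd: "c \<noteq> d"
  define e where "e = \<bar>c - d\<bar> / 2"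
  have e: "e > 0" using cd by (simp add: e_def)
  have c0: "0 \<le> c" "0 \<le> d" "c \<in> V" "d \<in> V" using assms obj_nonneg unfolding loc_def by auto
  define W1 where "W1 = V \<inter> {x. 0 \<le> x \<and> \<bar>x - c\<bar> < e}"
  define W2 where "W2 = V \<inter> {x. 0 \<le> x \<and> \<bar>x - d\<bar> < e}"
  have o: "obj W1" "obj W2" unfolding W1_def W2_def using obj_inter obj_nb assms(1) c0 e by auto
  have i: "c \<in> W1" "d \<in> W2" "W1 \<subseteq> V" "W2 \<subseteq> V" unfolding W1_def W2_def using c0 e by auto
  have disj: "W1 \<inter> W2 = {}" unfolding W1_def W2_def e_def by (auto simp: abs_if split: if_splits)
  obtain y1 where y1: "y1 \<in> F W1" "Fm W1 V 1 y1 = \<xi>" using assms(3) o i unfolding loc_def by blast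
  obtain y2 where y2: "y2 \<in> F W2" "Fm W2 V 1 y2 = \<xi>" using assms(4) o i unfolding loc_def by blast
  obtain U z u v where U: "obj U" "z \<in> F U" "u \<in> mor U W1" "v \<in> mor U W2" "Fm U W1 u z = y1" "Fm U W2 v z = y2"
    using common[OF o y1(1) y2(1)] by blast
  have Une: "U \<noteq> {}" using F_ne U by auto
  have W1ne: "W1 \<noteq> {}" "W2 \<noteq> {}" using i by auto
  have m1: "1 \<in> mor W1 V" "1 \<in> mor W2 V" using mor_incl W1ne i by auto
  have "Fm U V u z = \<xi>" using Fm_comp[OF U(1) o(1) assms(1) U(3) m1(1) U(2)] U y1 by simp
  moreover have "Fm U V v z = \<xi>" using Fm_comp[OF U(1) o(2) assms(1) U(4) m1(2) U(2)] U y2 by simp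
  moreover have "u \<in> mor U V" using mor_comp[OF Une U(3) m1(1)] by simp
  moreover have "v \<in> mor U V" using mor_comp[OF Une U(4) m1(2)] by simp
  ultimately have "u = v" using eqmor[OF U(1) assms(1) _ _ U(2)] by metis
  then have "(\<lambda>x. real u * x) ` U \<subseteq> W1 \<inter> W2" using U(3,4) mor_ne Une by auto
  then show False using disj Une by auto
qed

lemma loc_push: assumes "obj U" "obj V" "z \<in> F U" "a \<in> mor U V" "loc U z c"
  shows "loc V (Fm U V a z) (real a * c)"
proof -
  have Une: "U \<noteq> {}" using assms F_ne by auto
  have a: "0 < a" "(\<lambda>x. real a * x) ` U \<subseteq> V" using assms(4) mor_ne Une by auto
  have cU: "c \<in> U" using assms(5) loc_def by auto
  have "real a * c \<in> V" using a cU by auto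
  moreover have "\<exists>y\<in>F W. Fm W V 1 y = Fm U V a z" if W: "obj W" "real a * c \<in> W" "W \<subseteq> V" for W
  proof -
    define W' where "W' = U \<inter> {x. real a * x \<in> W}"
    have oW': "obj W'" unfolding W'_def using obj_inter obj_pre assms(1) W a by auto
    have cW': "c \<in> W'" "W' \<subseteq> U" unfolding W'_def using cU W by auto
    then obtain z' where z': "z' \<in> F W'" "Fm W' U 1 z' = z" using assms(5) oW' unfolding loc_def by blast
    have W'ne: "W' \<noteq> {}" using cW' by auto
    have m1: "1 \<in> mor W' U" using mor_incl W'ne cW' by auto
    have ma: "a \<in> mor W' W" using W'ne a unfolding mor_def W'_def by auto
    have Wne: "W \<noteq> {}" using W by auto
    have m2: "1 \<in> mor W V" using mor_incl Wne W by auto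
    have "Fm U V a z = Fm W' V a z'" using Fm_comp[OF oW' assms(1) assms(2) m1 assms(4) z'(1)] z' by simp
    also have "\<dots> = Fm W V 1 (Fm W' W a z')" using Fm_comp[OF oW' W(1) assms(2) ma m2 z'(1)] by simp
    finally show ?thesis using Fm_in[OF oW' W(1) ma z'(1)] by metis
  qed
  ultimately show ?thesis unfolding loc_def by blast
qed

definition V0 where "V0 = (SOME V. obj V \<and> F V \<noteq> {})"
definition x0 where "x0 = (SOME x. x \<in> F V0)"

lemma V0: "obj V0" "x0 \<in> F V0"
proof -
  have "\<exists>V. obj V \<and> F V \<noteq> {}" using fl unfolding flat_def by blast
  then have "obj V0 \<and> F V0 \<noteq> {}" unfolding V0_def by (rule someI_ex)
  then show "obj V0" "x0 \<in> F V0" unfolding x0_def by (auto intro: someI_ex)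
qed

definition rep :: "real set \<Rightarrow> 'a \<Rightarrow> rat \<Rightarrow> bool" where
  "rep V \<xi> q \<longleftrightarrow> (\<exists>U z a b. obj U \<and> z \<in> F U \<and> a \<in> mor U V \<and> b \<in> mor U V0 \<and>
      Fm U V a z = \<xi> \<and> Fm U V0 b z = x0 \<and> q = of_nat a / of_nat b)"

lemma rep_ex: "obj V \<Longrightarrow> \<xi> \<in> F V \<Longrightarrow> \<exists>q. rep V \<xi> q"
  using common[OF _ V0(1) _ V0(2)] unfolding rep_def by blast

lemma rep_unique: assumes "obj V" "\<xi> \<in> F V" "rep V \<xi> q" "rep V \<xi> q'" shows "q = q'"
proof -
  obtain U z a b where U: "obj U" "z \<in> F U" "a \<in> mor U V" "b \<in> mor U V0"
      "Fm U V a z = \<xi>" "Fm U V0 b z = x0" "q = of_nat a / of_nat b"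
    using assms(3) unfolding rep_def by blast
  obtain U' z' a' b' where U': "obj U'" "z' \<in> F U'" "a' \<in> mor U' V" "b' \<in> mor U' V0"
      "Fm U' V a' z' = \<xi>" "Fm U' V0 b' z' = x0" "q' = of_nat a' / of_nat b'"
    using assms(4) unfolding rep_def by blast
  obtain T w c c' where T: "obj T" "w \<in> F T" "c \<in> mor T U" "c' \<in> mor T U'"
      "Fm T U c w = z" "Fm T U' c' w = z'"
    using common[OF U(1) U'(1) U(2) U'(2)] by blast
  have Tne: "T \<noteq> {}" using T F_ne by auto
  have Une: "U \<noteq> {}" "U' \<noteq> {}" using U U' F_ne by auto
  have "Fm T V (a*c) w = \<xi>" using Fm_comp[OF T(1) U(1) assms(1) T(3) U(3) T(2)] T U by simp
  moreover have "Fm T V (a'*c') w = \<xi>" using Fm_comp[OF T(1) U'(1) assms(1) T(4) U'(3) T(2)] T U' by simp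
  ultimately have e1: "a*c = a'*c'"
    using eqmor[OF T(1) assms(1) mor_comp[OF Tne T(3) U(3)] mor_comp[OF Tne T(4) U'(3)] T(2)] by simp
  have "Fm T V0 (b*c) w = x0" using Fm_comp[OF T(1) U(1) V0(1) T(3) U(4) T(2)] T U by simp
  moreover have "Fm T V0 (b'*c') w = x0" using Fm_comp[OF T(1) U'(1) V0(1) T(4) U'(4) T(2)] T U' by simp
  ultimately have e2: "b*c = b'*c'"
    using eqmor[OF T(1) V0(1) mor_comp[OF Tne T(3) U(4)] mor_comp[OF Tne T(4) U'(4)] T(2)] by simp
  have pos: "0 < b" "0 < b'" "0 < c" "0 < c'" using U U' T mor_ne Une Tne by auto
  have "(a*c)*(b'*c') = (a'*c')*(b*c)" using e1 e2 by simp
  then have "(a*b')*(c*c') = (a'*b)*(c*c')" by (simp add: ac_simps)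
  then have "a*b' = a'*b" using pos by simp
  then have "(of_nat a :: rat) * of_nat b' = of_nat a' * of_nat b" by (metis of_nat_mult)
  then show ?thesis unfolding U(7) U'(7) using pos by (simp add: frac_eq_eq)
qed

definition r :: "real set \<Rightarrow> 'a \<Rightarrow> rat" where "r V \<xi> = (SOME q. rep V \<xi> q)"

lemma r_rep: "obj V \<Longrightarrow> \<xi> \<in> F V \<Longrightarrow> rep V \<xi> (r V \<xi>)"
  unfolding r_def using rep_ex by (metis someI_ex)

lemma r_eq: "obj V \<Longrightarrow> \<xi> \<in> F V \<Longrightarrow> rep V \<xi> q \<Longrightarrow> r V \<xi> = q"
  using r_rep rep_unique by blast

lemma r_pos: assumes "obj V" "\<xi> \<in> F V" shows "r V \<xi> > 0"
proof -
  obtain U z a b where U: "obj U" "z \<in> F U" "a \<in> mor U V" "b \<in> mor U V0"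
      "r V \<xi> = of_nat a / of_nat b"
    using r_rep[OF assms] unfolding rep_def by blast
  have "U \<noteq> {}" using U F_ne by auto
  then have "0 < a" "0 < b" using U mor_ne by auto
  then show ?thesis using U(5) by simp
qed

lemma r_nat: assumes "obj V" "obj W" "n \<in> mor V W" "\<xi> \<in> F V"
  shows "r W (Fm V W n \<xi>) = of_nat n * r V \<xi>"
proof -
  obtain U z a b where U: "obj U" "z \<in> F U" "a \<in> mor U V" "b \<in> mor U V0"
      "Fm U V a z = \<xi>" "Fm U V0 b z = x0" "r V \<xi> = of_nat a / of_nat b"
    using r_rep[OF assms(1,4)] unfolding rep_def by blast
  have "U \<noteq> {}" using U F_ne by auto
  then have m: "n * a \<in> mor U W" using mor_comp U assms by auto
  have "Fm V W n \<xi> = Fm U W (n*a) z" using Fm_comp[OF U(1) assms(1,2) U(3) assms(3) U(2)] U by simp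
  then have "rep W (Fm V W n \<xi>) (of_nat (n*a) / of_nat b)" unfolding rep_def using U m
    by (intro exI[of _ U] exI[of _ z] exI[of _ "n*a"] exI[of _ b]) auto
  then have "r W (Fm V W n \<xi>) = of_nat (n*a) / of_nat b"
    using r_eq assms Fm_in by blast
  then show ?thesis using U(7) by simp
qed

lemma r_inj: assumes "obj V" "\<xi> \<in> F V" "\<zeta> \<in> F V" "r V \<xi> = r V \<zeta>" shows "\<xi> = \<zeta>"
proof -
  obtain T w c c' where T: "obj T" "w \<in> F T" "c \<in> mor T V" "c' \<in> mor T V"
      "Fm T V c w = \<xi>" "Fm T V c' w = \<zeta>"
    using common[OF assms(1) assms(1) assms(2) assms(3)] by blast
  have "r V \<xi> = of_nat c * r T w" "r V \<zeta> = of_nat c' * r T w" using r_nat T assms(1) by auto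
  then have "c = c'" using assms(4) r_pos[OF T(1,2)] by simp
  then show ?thesis using T by simp
qed

definition lam where "lam = (SOME c. loc V0 x0 c)"

lemma lam: "loc V0 x0 lam" unfolding lam_def using loc_ex[OF V0] by (metis someI_ex)

lemma lam_nonneg: "0 \<le> lam" using lam V0 obj_nonneg unfolding loc_def by auto

lemma loc_r: assumes "obj V" "\<xi> \<in> F V" shows "loc V \<xi> (lam * of_rat (r V \<xi>))"
proof -
  obtain U z a b where U: "obj U" "z \<in> F U" "a \<in> mor U V" "b \<in> mor U V0"
      "Fm U V a z = \<xi>" "Fm U V0 b z = x0" "r V \<xi> = of_nat a / of_nat b"
    using r_rep[OF assms] unfolding rep_def by blast
  have "U \<noteq> {}" using U F_ne by auto
  then have pos: "0 < a" "0 < b" using U mor_ne by auto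
  obtain c where c: "loc U z c" using loc_ex U by blast
  have l1: "loc V \<xi> (real a * c)" using loc_push[OF U(1) assms(1) U(2,3) c] U by simp
  have "loc V0 x0 (real b * c)" using loc_push[OF U(1) V0(1) U(2,4) c] U by simp
  then have "lam = real b * c" using loc_unique[OF V0] lam by blast
  then have "lam * of_rat (r V \<xi>) = real a * c" using U(7) pos by (simp add: of_rat_divide)
  then show ?thesis using l1 by simp
qed

lemma r_surj: assumes "obj V" "obj W" "\<zeta> \<in> F W" "lam * of_rat (r W \<zeta>) \<in> V"
  shows "\<exists>\<xi>\<in>F V. r V \<xi> = r W \<zeta>"
proof -
  let ?c = "lam * of_rat (r W \<zeta>)"
  have l: "loc W \<zeta> ?c" using loc_r assms by blast
  have o: "obj (W \<inter> V)" using obj_inter assms by auto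
  have "?c \<in> W \<inter> V" using l assms unfolding loc_def by auto
  then obtain y where y: "y \<in> F (W \<inter> V)" "Fm (W \<inter> V) W 1 y = \<zeta>" using l o unfolding loc_def by blast
  have ne: "W \<inter> V \<noteq> {}" using y F_ne by auto
  have m1: "1 \<in> mor (W \<inter> V) W" "1 \<in> mor (W \<inter> V) V" using mor_incl ne by auto
  have "r W \<zeta> = r (W \<inter> V) y" using r_nat[OF o assms(2) m1(1) y(1)] y by simp
  also have "\<dots> = r V (Fm (W \<inter> V) V 1 y)" using r_nat[OF o assms(1) m1(2) y(1)] by simp
  finally show ?thesis using Fm_in[OF o assms(1) m1(2) y(1)] by metis
qed

definition Kp where "Kp = {q. \<exists>V \<xi>. obj V \<and> \<xi> \<in> F V \<and> q = r V \<xi>}"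

lemma Kp_pos: "q \<in> Kp \<Longrightarrow> q > 0" unfolding Kp_def using r_pos by auto

lemma one_Kp: "1 \<in> Kp"
proof -
  have "V0 \<noteq> {}" using V0 F_ne by auto
  then have "1 \<in> mor V0 V0" using mor_incl by auto
  then have "rep V0 x0 (of_nat 1 / of_nat 1)" unfolding rep_def using V0 Fm_id
    by (intro exI[of _ V0] exI[of _ x0] exI[of _ 1]) auto
  then have "r V0 x0 = 1" using r_eq V0 by simp
  then show ?thesis unfolding Kp_def using V0 by (intro CollectI exI[of _ V0] exI[of _ x0]) auto
qed

lemma Kp_comb: assumes "p \<in> Kp" "q \<in> Kp"
  shows "\<exists>U z a b. obj U \<and> z \<in> F U \<and> 0 < a \<and> 0 < b \<and> p = of_nat a * r U z \<and> q = of_nat b * r U z"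
proof -
  obtain V \<xi> W \<zeta> where v: "obj V" "\<xi> \<in> F V" "p = r V \<xi>" "obj W" "\<zeta> \<in> F W" "q = r W \<zeta>"
    using assms unfolding Kp_def by blast
  obtain U z a b where U: "obj U" "z \<in> F U" "a \<in> mor U V" "b \<in> mor U W" "Fm U V a z = \<xi>" "Fm U W b z = \<zeta>"
    using common[OF v(1) v(4) v(2) v(5)] by blast
  have "U \<noteq> {}" using U F_ne by auto
  then have "0 < a" "0 < b" using U mor_ne by auto
  moreover have "p = of_nat a * r U z" "q = of_nat b * r U z" using r_nat U v by auto
  ultimately show ?thesis using U by blast
qed

lemma Kp_mult: assumes "obj U" "z \<in> F U" "0 < n" shows "of_nat n * r U z \<in> Kp"
proof -
  obtain B where B: "B > 0" "U \<subseteq> {0..<B}" using obj_bounded assms by blast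
  let ?W = "{0..<real n * B}"
  have "U \<noteq> {}" using assms F_ne by auto
  moreover have "(\<lambda>x. real n * x) ` U \<subseteq> ?W" using B assms(3) by auto
  ultimately have m: "n \<in> mor U ?W" using mor_ne assms by auto
  have "obj ?W" by (rule obj_ico)
  then show ?thesis using r_nat[OF assms(1) _ m assms(2)] Fm_in[OF assms(1) _ m assms(2)] unfolding Kp_def
    by (intro CollectI exI[of _ ?W] exI[of _ "Fm U ?W n z"]) auto
qed

lemma Kp_add: "p \<in> Kp \<Longrightarrow> q \<in> Kp \<Longrightarrow> p + q \<in> Kp"
proof -
  assume "p \<in> Kp" "q \<in> Kp"
  then obtain U z a b where U: "obj U" "z \<in> F U" "0 < a" "0 < b" "p = of_nat a * r U z" "q = of_nat b * r U z"
    using Kp_comb by blast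
  then have "p + q = of_nat (a+b) * r U z" by (simp add: algebra_simps)
  then show ?thesis using Kp_mult[OF U(1,2), of "a+b"] U by simp
qed

lemma Kp_diff: "p \<in> Kp \<Longrightarrow> q \<in> Kp \<Longrightarrow> q < p \<Longrightarrow> p - q \<in> Kp"
proof -
  assume "p \<in> Kp" "q \<in> Kp" "q < p"
  then obtain U z a b where U: "obj U" "z \<in> F U" "0 < a" "0 < b" "p = of_nat a * r U z" "q = of_nat b * r U z"
    using Kp_comb by blast
  have rp: "r U z > 0" using r_pos U by auto
  have "b < a" using \<open>q < p\<close> U rp by (simp add: mult_less_cancel_right)
  then have "p - q = of_nat (a-b) * r U z" using U by (simp add: algebra_simps of_nat_diff)
  then show ?thesis using Kp_mult[OF U(1,2), of "a-b"] \<open>b < a\<close> by simp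
qed

end



lemma pos_elem: fixes H :: "'a::linordered_ab_group_add set"
  assumes "add_subgroup H" "H \<noteq> {0}" shows "\<exists>h\<in>H. h > 0"
proof -
  have z: "0 \<in> H" using assms unfolding add_subgroup_def by blast
  obtain x where x: "x \<in> H" "x \<noteq> 0" using assms z by blast
  have "-x \<in> H" using assms(1) x unfolding add_subgroup_def by blast
  show ?thesis
  proof (cases "x > 0")
    case True then show ?thesis using x by blast
  next
    case False then have "-x > 0" using x by simp
    then show ?thesis using \<open>-x \<in> H\<close> by blast
  qed
qed

lemma part1: assumes R: "rank_one_real H" shows "flat_continuous (FH H) FHm"
proof -
  have H: "add_subgroup H" "H \<noteq> {0}" using R rank_one_real_def by auto
  have f1: "is_functor (FH H) FHm"
    unfolding is_functor_def
  proof (intro conjI allI impI)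
    fix V W n x assume a: "obj V \<and> obj W \<and> n \<in> mor V W \<and> x \<in> FH H V"
    then have "V \<noteq> {}" unfolding FH_def by auto
    then have "0 < n" "(\<lambda>x. real n * x) ` V \<subseteq> W" using a mor_ne by auto
    moreover have "real n * x \<in> H" using sg_mult_nat[OF H(1)] a unfolding FH_def by auto
    ultimately show "FHm V W n x \<in> FH H W" using a unfolding FH_def FHm_def by auto
  next
    fix V x show "FHm V V 1 x = x" unfolding FHm_def by simp
  next
    fix U V W n m x assume a: "obj U \<and> obj V \<and> obj W \<and> n \<in> mor U V \<and> m \<in> mor V W \<and> x \<in> FH H U"
    then have "U \<noteq> {}" unfolding FH_def by auto
    then show "FHm V W m (FHm U V n x) = FHm U W (cmp U m n) x" unfolding FHm_def cmp_def by simp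
  qed
  have f2: "flat (FH H) FHm"
    unfolding flat_def
  proof (intro conjI allI impI)
    obtain h where h: "h \<in> H" "h > 0" using pos_elem H by blast
    then have "h \<in> FH H {0..<h+1}" unfolding FH_def by auto
    then show "\<exists>V. obj V \<and> FH H V \<noteq> {}" using obj_ico by blast
  next
    fix V W x y assume a: "obj V \<and> obj W \<and> x \<in> FH H V \<and> y \<in> FH H W"
    then obtain z a b where z: "z \<in> H" "z > 0" "a > 0" "b > 0" "x = of_nat a * z" "y = of_nat b * z"
      using commens_real[OF R, of x y] unfolding FH_def by auto
    define U where "U = {t. real a * t \<in> V} \<inter> {t. real b * t \<in> W}"
    have oU: "obj U" unfolding U_def using obj_inter obj_pre a z by auto
    have zU: "z \<in> U" unfolding U_def using a z unfolding FH_def by auto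
    then have "a \<in> mor U V" "b \<in> mor U W" using z unfolding mor_def U_def by auto
    moreover have "z \<in> FH H U" using zU z unfolding FH_def by auto
    ultimately show "\<exists>U z u v. obj U \<and> z \<in> FH H U \<and> u \<in> mor U V \<and> v \<in> mor U W \<and>
                   FHm U V u z = x \<and> FHm U W v z = y" using oU z unfolding FHm_def by metis
  next
    fix V W u v x assume a: "obj V \<and> obj W \<and> u \<in> mor V W \<and> v \<in> mor V W \<and> x \<in> FH H V \<and>
                  FHm V W u x = FHm V W v x"
    then have "u = v" unfolding FHm_def FH_def by auto
    moreover have "V \<noteq> {}" using a unfolding FH_def by auto
    ultimately show "\<exists>U z w. obj U \<and> z \<in> FH H U \<and> w \<in> mor U V \<and> FHm U V w z = x \<and>
                 cmp U u w = cmp U v w" using a mor_incl[of V V] unfolding FHm_def by force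
  qed
  have f3: "continuous_functor (FH H) FHm"
    unfolding continuous_functor_def
  proof (intro allI impI ballI)
    fix V S x assume a: "obj V \<and> (\<forall>W\<in>S. obj W \<and> W \<subseteq> V) \<and> \<Union>S = V" and x: "x \<in> FH H V"
    then obtain W where "W \<in> S" "x \<in> W" unfolding FH_def by auto
    then show "\<exists>W\<in>S. \<exists>y\<in>FH H W. FHm W V 1 y = x" using x unfolding FH_def FHm_def by auto
  qed
  show ?thesis using f1 f2 f3 flat_continuous_def by blast
qed

lemma part2: assumes R: "rank_one_rat H" shows "flat_continuous (F'H H) F'Hm"
proof -
  have H: "add_subgroup H" "H \<noteq> {0}" using R rank_one_rat_def by auto
  have f1: "is_functor (F'H H) F'Hm"
    unfolding is_functor_def
  proof (intro conjI allI impI)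
    fix V W n x assume a: "obj V \<and> obj W \<and> n \<in> mor V W \<and> x \<in> F'H H V"
    then have V: "0 \<in> V" "x \<in> H" "x > 0" unfolding F'H_def by (auto split: if_splits)
    then have "V \<noteq> {}" by auto
    then have "0 < n" "(\<lambda>x. real n * x) ` V \<subseteq> W" using a mor_ne by auto
    then have "0 \<in> W" using V by force
    moreover have "of_nat n * x \<in> H" using sg_mult_nat[OF H(1)] V by auto
    ultimately show "F'Hm V W n x \<in> F'H H W" using V \<open>0 < n\<close> unfolding F'H_def F'Hm_def by auto
  next
    fix V x show "F'Hm V V 1 x = x" unfolding F'Hm_def by simp
  next
    fix U V W n m x assume a: "obj U \<and> obj V \<and> obj W \<and> n \<in> mor U V \<and> m \<in> mor V W \<and> x \<in> F'H H U"
    then have "U \<noteq> {}" unfolding F'H_def by (auto split: if_splits)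
    then show "F'Hm V W m (F'Hm U V n x) = F'Hm U W (cmp U m n) x" unfolding F'Hm_def cmp_def by simp
  qed
  have f2: "flat (F'H H) F'Hm"
    unfolding flat_def
  proof (intro conjI allI impI)
    obtain h where h: "h \<in> H" "h > 0" using pos_elem H by blast
    then have "h \<in> F'H H {0..<1}" unfolding F'H_def by auto
    then show "\<exists>V. obj V \<and> F'H H V \<noteq> {}" using obj_ico by blast
  next
    fix V W x y assume a: "obj V \<and> obj W \<and> x \<in> F'H H V \<and> y \<in> F'H H W"
    then have xy: "0 \<in> V" "0 \<in> W" "x \<in> H" "y \<in> H" "x > 0" "y > 0" unfolding F'H_def by (auto split: if_splits)
    then obtain z a b where z: "z \<in> H" "z > 0" "a > 0" "b > 0" "x = of_nat a * z" "y = of_nat b * z"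
      using commens_rat[OF H(1), of x y] by auto
    define U where "U = {t. real a * t \<in> V} \<inter> {t. real b * t \<in> W}"
    have oU: "obj U" unfolding U_def using obj_inter obj_pre a z by auto
    have zU: "0 \<in> U" unfolding U_def using xy by auto
    then have Une: "U \<noteq> {}" by auto
    have "(\<lambda>t. real a * t) ` U \<subseteq> V" "(\<lambda>t. real b * t) ` U \<subseteq> W" unfolding U_def by auto
    then have "a \<in> mor U V" "b \<in> mor U W" using z mor_ne[OF Une] by auto
    moreover have "z \<in> F'H H U" using zU z unfolding F'H_def by auto
    ultimately show "\<exists>U z u v. obj U \<and> z \<in> F'H H U \<and> u \<in> mor U V \<and> v \<in> mor U W \<and>
                   F'Hm U V u z = x \<and> F'Hm U W v z = y" using oU z unfolding F'Hm_def by metis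
  next
    fix V W u v x assume a: "obj V \<and> obj W \<and> u \<in> mor V W \<and> v \<in> mor V W \<and> x \<in> F'H H V \<and>
                  F'Hm V W u x = F'Hm V W v x"
    then have "u = v" unfolding F'Hm_def F'H_def by (auto split: if_splits)
    moreover have "V \<noteq> {}" using a unfolding F'H_def by (auto split: if_splits)
    ultimately show "\<exists>U z w. obj U \<and> z \<in> F'H H U \<and> w \<in> mor U V \<and> F'Hm U V w z = x \<and>
                 cmp U u w = cmp U v w" using a mor_incl[of V V] unfolding F'Hm_def by force
  qed
  have f3: "continuous_functor (F'H H) F'Hm"
    unfolding continuous_functor_def
  proof (intro allI impI ballI)
    fix V S x assume a: "obj V \<and> (\<forall>W\<in>S. obj W \<and> W \<subseteq> V) \<and> \<Union>S = V" and x: "x \<in> F'H H V"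
    then have "0 \<in> V" unfolding F'H_def by (auto split: if_splits)
    then obtain W where "W \<in> S" "0 \<in> W" using a by auto
    then show "\<exists>W\<in>S. \<exists>y\<in>F'H H W. F'Hm W V 1 y = x" using x \<open>0 \<in> V\<close> unfolding F'H_def F'Hm_def by auto
  qed
  show ?thesis using f1 f2 f3 flat_continuous_def by blast
qed



context fc begin

lemma Kp_sg: "add_subgroup (sgP Kp)"
  using sgP_sub[of Kp] Kp_pos Kp_add Kp_diff by blast

lemma K_rank: "rank_one_rat (sgP Kp)"
proof -
  have "1 \<in> sgP Kp" using one_Kp unfolding sgP_def by blast
  then show ?thesis using Kp_sg unfolding rank_one_rat_def by auto
qed

lemma Kpos: "q \<in> sgP Kp \<and> q > 0 \<longleftrightarrow> q \<in> Kp"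
  using sgP_pos[of Kp q] Kp_pos by blast

lemma inKp: "obj V \<Longrightarrow> \<xi> \<in> F V \<Longrightarrow> r V \<xi> \<in> Kp"
  unfolding Kp_def by blast

lemma classify_q: assumes l: "lam = 0" shows "nat_iso F Fm (F'H (sgP Kp)) F'Hm"
  unfolding nat_iso_def
proof (intro exI[of _ r] conjI allI impI)
  fix V assume V: "obj V"
  have "inj_on (r V) (F V)" using r_inj V unfolding inj_on_def by blast
  moreover have "r V ` F V \<subseteq> F'H (sgP Kp) V"
  proof
    fix q assume "q \<in> r V ` F V"
    then obtain \<xi> where x: "\<xi> \<in> F V" "q = r V \<xi>" by auto
    have "0 \<in> V" using loc_r[OF V x(1)] l unfolding loc_def by simp
    then show "q \<in> F'H (sgP Kp) V" using x inKp[OF V x(1)] Kpos unfolding F'H_def by auto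
  qed
  moreover have "F'H (sgP Kp) V \<subseteq> r V ` F V"
  proof
    fix q assume q: "q \<in> F'H (sgP Kp) V"
    then have "0 \<in> V" "q \<in> Kp" unfolding F'H_def using Kpos by (auto split: if_splits)
    then obtain W \<zeta> where w: "obj W" "\<zeta> \<in> F W" "q = r W \<zeta>" unfolding Kp_def by blast
    then obtain \<xi> where "\<xi> \<in> F V" "r V \<xi> = r W \<zeta>" using r_surj[OF V w(1,2)] l \<open>0 \<in> V\<close> by auto
    then show "q \<in> r V ` F V" using w by (metis image_eqI)
  qed
  ultimately show "bij_betw (r V) (F V) (F'H (sgP Kp) V)" unfolding bij_betw_def by auto
next
  fix V W n x assume "obj V \<and> obj W \<and> n \<in> mor V W \<and> x \<in> F V"
  then show "r W (Fm V W n x) = F'Hm V W n (r V x)" using r_nat unfolding F'Hm_def by auto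
qed

definition gl where "gl q = lam * of_rat q"

lemma classify_p: assumes l: "lam > 0"
  shows "rank_one_real (gl ` sgP Kp) \<and> nat_iso F Fm (FH (gl ` sgP Kp)) FHm"
proof
  let ?K = "sgP Kp" and ?H = "gl ` sgP Kp"
  have K: "add_subgroup ?K" by (rule Kp_sg)
  have ga: "gl (x + y) = gl x + gl y" "gl (-x) = - gl x" "gl 0 = 0" for x y
    unfolding gl_def by (simp_all add: of_rat_add of_rat_minus algebra_simps)
  have ginj: "inj_on gl ?K" unfolding inj_on_def gl_def using l by simp
  have Hs: "add_subgroup ?H" unfolding add_subgroup_def
  proof (intro conjI ballI)
    have "0 \<in> ?K" using K unfolding add_subgroup_def by blast
    then show "0 \<in> ?H" using ga(3) by (metis image_eqI)
  next
    fix x y assume "x \<in> ?H" "y \<in> ?H"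
    then obtain p q where pq: "p \<in> ?K" "q \<in> ?K" "x = gl p" "y = gl q" by auto
    then have "p + q \<in> ?K" using K unfolding add_subgroup_def by blast
    then show "x + y \<in> ?H" using pq ga(1) by (metis image_eqI)
  next
    fix x assume "x \<in> ?H"
    then obtain p where pq: "p \<in> ?K" "x = gl p" by auto
    then have "-p \<in> ?K" using K unfolding add_subgroup_def by blast
    then show "-x \<in> ?H" using pq ga(2) by (metis image_eqI)
  qed
  have "1 \<in> ?K" using one_Kp unfolding sgP_def by blast
  then have "gl 1 \<in> ?H" by blast
  moreover have "gl 1 \<noteq> 0" using l unfolding gl_def by simp
  ultimately have Hne: "?H \<noteq> {0}" by (metis singletonD)
  define f where "f = inv_into ?K gl"
  have fb: "bij_betw f ?H ?K" unfolding f_def using ginj by (simp add: bij_betw_inv_into inj_on_imp_bij_betw)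
  have fa: "\<forall>x\<in>?H. \<forall>y\<in>?H. f (x + y) = f x + f y"
  proof (intro ballI)
    fix x y assume "x \<in> ?H" "y \<in> ?H"
    then obtain p q where pq: "p \<in> ?K" "q \<in> ?K" "x = gl p" "y = gl q" by auto
    then have "p + q \<in> ?K" using K unfolding add_subgroup_def by blast
    then have "f (gl (p + q)) = p + q" unfolding f_def using ginj by (simp add: inv_into_f_f)
    moreover have "f x = p" "f y = q" unfolding f_def using ginj pq by (simp_all add: inv_into_f_f)
    ultimately show "f (x + y) = f x + f y" using pq ga by simp
  qed
  show "rank_one_real ?H" unfolding rank_one_real_def using Hs Hne K_rank fb fa by blast
  show "nat_iso F Fm (FH ?H) FHm"
    unfolding nat_iso_def
  proof (intro exI[of _ "\<lambda>V \<xi>. gl (r V \<xi>)"] conjI allI impI)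
    fix V assume V: "obj V"
    have "inj_on (\<lambda>\<xi>. gl (r V \<xi>)) (F V)" using r_inj V l unfolding inj_on_def gl_def by auto
    moreover have "(\<lambda>\<xi>. gl (r V \<xi>)) ` F V \<subseteq> FH ?H V"
    proof
      fix h assume "h \<in> (\<lambda>\<xi>. gl (r V \<xi>)) ` F V"
      then obtain \<xi> where x: "\<xi> \<in> F V" "h = gl (r V \<xi>)" by auto
      have "h \<in> V" using loc_r[OF V x(1)] x unfolding loc_def gl_def by simp
      moreover have "r V \<xi> \<in> ?K" "r V \<xi> > 0" using inKp[OF V x(1)] Kpos by auto
      moreover then have "h > 0" using x l unfolding gl_def by simp
      ultimately show "h \<in> FH ?H V" using x unfolding FH_def by auto
    qed
    moreover have "FH ?H V \<subseteq> (\<lambda>\<xi>. gl (r V \<xi>)) ` F V"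
    proof
      fix h assume h: "h \<in> FH ?H V"
      then obtain q where q: "q \<in> ?K" "h = gl q" "h \<in> V" "h > 0" unfolding FH_def by auto
      then have "q > 0" using l unfolding gl_def by (simp add: zero_less_mult_iff)
      then have "q \<in> Kp" using q Kpos by auto
      then obtain W \<zeta> where w: "obj W" "\<zeta> \<in> F W" "q = r W \<zeta>" unfolding Kp_def by blast
      then obtain \<xi> where "\<xi> \<in> F V" "r V \<xi> = r W \<zeta>" using r_surj[OF V w(1,2)] q unfolding gl_def by auto
      then show "h \<in> (\<lambda>\<xi>. gl (r V \<xi>)) ` F V" using w q by (metis image_eqI)
    qed
    ultimately show "bij_betw (\<lambda>\<xi>. gl (r V \<xi>)) (F V) (FH ?H V)" unfolding bij_betw_def by auto
  next
    fix V W n x assume "obj V \<and> obj W \<and> n \<in> mor V W \<and> x \<in> F V"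
    then show "gl (r W (Fm V W n x)) = FHm V W n (gl (r V x))" using r_nat unfolding FHm_def gl_def
      by (simp add: of_rat_mult)
  qed
qed

lemma classify: "(\<exists>H. rank_one_real H \<and> nat_iso F Fm (FH H) FHm) \<or>
             (\<exists>H. rank_one_rat H \<and> nat_iso F Fm (F'H H) F'Hm)"
proof (cases "lam = 0")
  case True then show ?thesis using classify_q K_rank by blast
next
  case False then have "lam > 0" using lam_nonneg by simp
  then show ?thesis using classify_p by blast
qed

end



lemma part4: assumes HR: "rank_one_real H" and KR: "rank_one_real K"
  shows "nat_iso (FH H) FHm (FH K) FHm \<longleftrightarrow> H = K"
proof
  assume "H = K"
  then show "nat_iso (FH H) FHm (FH K) FHm" unfolding nat_iso_def
    by (intro exI[of _ "\<lambda>V x. x"]) (auto simp: bij_betw_def)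
next
  assume "nat_iso (FH H) FHm (FH K) FHm"
  then obtain \<eta> where bij: "\<And>V. obj V \<Longrightarrow> bij_betw (\<eta> V) (FH H V) (FH K V)"
    and nat: "\<And>V W n x. obj V \<Longrightarrow> obj W \<Longrightarrow> n \<in> mor V W \<Longrightarrow> x \<in> FH H V \<Longrightarrow>
              \<eta> W (FHm V W n x) = FHm V W n (\<eta> V x)"
    unfolding nat_iso_def by blast
  have claim: "\<eta> V x = x" if x: "x \<in> H" "x > 0" "obj V" "x \<in> V" for V x
  proof (rule ccontr)
    assume ne: "\<eta> V x \<noteq> x"
    define e where "e = \<bar>\<eta> V x - x\<bar>"
    have e: "e > 0" using ne e_def by simp
    define W where "W = V \<inter> {t. 0 \<le> t \<and> \<bar>t - x\<bar> < e}"
    have oW: "obj W" unfolding W_def using obj_inter obj_nb x e by auto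
    have xW: "x \<in> W" "W \<subseteq> V" unfolding W_def using x e by auto
    then have m: "1 \<in> mor W V" using mor_incl by blast
    have xF: "x \<in> FH H W" using xW x unfolding FH_def by auto
    have "\<eta> V x = \<eta> W x" using nat[OF oW x(3) m xF] unfolding FHm_def by simp
    moreover have "\<eta> W x \<in> FH K W" using bij[OF oW] xF unfolding bij_betw_def by auto
    ultimately have "\<eta> V x \<in> W" unfolding FH_def by auto
    then show False unfolding W_def e_def by simp
  qed
  have "h \<in> H \<longleftrightarrow> h \<in> K" if h: "h > 0" for h
  proof
    let ?V = "{0..<h+1}"
    have oV: "obj ?V" by (rule obj_ico)
    assume "h \<in> H"
    then have "h \<in> FH H ?V" using h unfolding FH_def by auto
    then have "\<eta> ?V h \<in> FH K ?V" using bij[OF oV] unfolding bij_betw_def by auto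
    then show "h \<in> K" using claim[OF \<open>h \<in> H\<close> h oV] h unfolding FH_def by auto
  next
    let ?V = "{0..<h+1}"
    have oV: "obj ?V" by (rule obj_ico)
    assume "h \<in> K"
    then have "h \<in> FH K ?V" using h unfolding FH_def by auto
    then have "h \<in> \<eta> ?V ` FH H ?V" using bij[OF oV] unfolding bij_betw_def by auto
    then obtain x where x: "x \<in> FH H ?V" "h = \<eta> ?V x" by auto
    then have "\<eta> ?V x = x" using claim oV unfolding FH_def by auto
    then show "h \<in> H" using x unfolding FH_def by auto
  qed
  then show "H = K" using sg_eq_pos HR KR unfolding rank_one_real_def by blast
qed

lemma part6: assumes HR: "rank_one_real H" shows "\<not> nat_iso (FH H) FHm (F'H K) F'Hm"
proof
  assume "nat_iso (FH H) FHm (F'H K) F'Hm"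
  then obtain \<eta> where bij: "\<And>V. obj V \<Longrightarrow> bij_betw (\<eta> V) (FH H V) (F'H K V)"
    unfolding nat_iso_def by blast
  have H: "add_subgroup H" "H \<noteq> {0}" using HR rank_one_real_def by auto
  have z: "0 \<in> H" using H unfolding add_subgroup_def by blast
  obtain x where x: "x \<in> H" "x \<noteq> 0" using H z by blast
  have "-x \<in> H" using H(1) x unfolding add_subgroup_def by blast
  then obtain h where h: "h \<in> H" "h > 0" using x by (cases "x > 0") (auto intro: exI[of _ "-x"])
  let ?V = "{h/2<..<2*h}"
  have oV: "obj ?V" using obj_ioo h by simp
  have "h \<in> FH H ?V" using h unfolding FH_def by auto
  moreover have "F'H K ?V = {}" using h unfolding F'H_def by auto
  ultimately show False using bij[OF oV] unfolding bij_betw_def by blast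
qed

lemma part5: assumes HR: "rank_one_rat H" and KR: "rank_one_rat K"
  shows "nat_iso (F'H H) F'Hm (F'H K) F'Hm \<longleftrightarrow> ord_group_iso H K"
proof
  have H: "add_subgroup H" and K: "add_subgroup K" using HR KR rank_one_rat_def by auto
  assume "nat_iso (F'H H) F'Hm (F'H K) F'Hm"
  then obtain \<eta> where bij: "\<And>V. obj V \<Longrightarrow> bij_betw (\<eta> V) (F'H H V) (F'H K V)"
    and nat: "\<And>V W n x. obj V \<Longrightarrow> obj W \<Longrightarrow> n \<in> mor V W \<Longrightarrow> x \<in> F'H H V \<Longrightarrow>
              \<eta> W (F'Hm V W n x) = F'Hm V W n (\<eta> V x)"
    unfolding nat_iso_def by blast
  let ?V1 = "{0..<1::real}"
  have o1: "obj ?V1" by (rule obj_ico)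
  define f where "f = \<eta> ?V1"
  have claimA: "\<eta> V x = f x" if x: "x \<in> H" "x > 0" "obj V" "0 \<in> V" for V x
  proof -
    define W where "W = V \<inter> ?V1"
    have oW: "obj W" unfolding W_def using obj_inter x o1 by auto
    have W: "0 \<in> W" "W \<subseteq> V" "W \<subseteq> ?V1" unfolding W_def using x by auto
    then have m: "1 \<in> mor W V" "1 \<in> mor W ?V1" using mor_incl by blast+
    have xF: "x \<in> F'H H W" using W x unfolding F'H_def by auto
    have "\<eta> V x = \<eta> W x" using nat[OF oW x(3) m(1) xF] unfolding F'Hm_def by simp
    moreover have "\<eta> ?V1 x = \<eta> W x" using nat[OF oW o1 m(2) xF] unfolding F'Hm_def by simp
    ultimately show ?thesis unfolding f_def by simp
  qed
  have fm: "f (of_nat n * x) = of_nat n * f x" if x: "x \<in> H" "x > 0" and n: "n > 0" for n x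
  proof -
    let ?Vn = "{0..<real n}"
    have on: "obj ?Vn" by (rule obj_ico)
    have "real n * t < real n" if "t < 1" for t using mult_strict_left_mono[OF that, of "real n"] n by simp
    then have "(\<lambda>t. real n * t) ` ?V1 \<subseteq> ?Vn" by auto
    then have m: "n \<in> mor ?V1 ?Vn" using n mor_ne[of ?V1] by auto
    have xF: "x \<in> F'H H ?V1" using x unfolding F'H_def by auto
    have "\<eta> ?Vn (of_nat n * x) = of_nat n * f x" using nat[OF o1 on m xF] unfolding F'Hm_def f_def by simp
    moreover have "of_nat n * x \<in> H" "of_nat n * x > 0" using sg_mult_nat[OF H] x n by auto
    moreover have "(0::real) \<in> ?Vn" using n by simp
    ultimately show ?thesis using claimA on by metis
  qed
  have FV1: "F'H H ?V1 = {h\<in>H. h > 0}" "F'H K ?V1 = {h\<in>K. h > 0}" unfolding F'H_def by auto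
  have fb: "bij_betw f {h\<in>H. h > 0} {k\<in>K. k > 0}" using bij[OF o1] FV1 unfolding f_def by simp
  have fa: "f (x + y) = f x + f y" if xy: "x \<in> H" "y \<in> H" "x > 0" "y > 0" for x y
  proof -
    obtain z a b where z: "z \<in> H" "z > 0" "a > 0" "b > 0" "x = of_nat a * z" "y = of_nat b * z"
      using commens_rat[OF H xy] by blast
    have "x + y = of_nat (a+b) * z" using z by (simp add: algebra_simps)
    then have "f (x + y) = of_nat (a+b) * f z" using fm[of z "a+b"] z by (simp del: of_nat_add)
    moreover have "f x = of_nat a * f z" "f y = of_nat b * f z" using fm z by auto
    ultimately show ?thesis by (simp add: algebra_simps)
  qed
  show "ord_group_iso H K" using ext_pos[OF H K fb fa] by blast
next
  have H: "add_subgroup H" and K: "add_subgroup K" using HR KR rank_one_rat_def by auto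
  assume "ord_group_iso H K"
  then obtain \<phi> where pb: "bij_betw \<phi> H K" and pa: "\<forall>x\<in>H. \<forall>y\<in>H. \<phi> (x + y) = \<phi> x + \<phi> y"
    and pm: "\<And>x y. x \<in> H \<Longrightarrow> y \<in> H \<Longrightarrow> x < y \<Longrightarrow> \<phi> x < \<phi> y"
    unfolding ord_group_iso_def by blast
  have p0: "\<phi> 0 = 0" using add_hom_0[OF H pa] .
  have h0: "0 \<in> H" using H unfolding add_subgroup_def by blast
  have ppos: "\<phi> x > 0" if "x \<in> H" "x > 0" for x using pm[OF h0 that] p0 by simp
  have pK: "\<phi> x \<in> K" if "x \<in> H" for x using pb that unfolding bij_betw_def by auto
  have psurj: "k \<in> \<phi> ` {h\<in>H. h > 0}" if "k \<in> K" "k > 0" for k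
  proof -
    have "k \<in> \<phi> ` H" using pb that unfolding bij_betw_def by auto
    then obtain x where x: "x \<in> H" "\<phi> x = k" by auto
    have "x > 0"
    proof (rule ccontr)
      assume "\<not> x > 0"
      then have "x = 0 \<or> x < 0" by auto
      then have "\<phi> x \<le> 0" using p0 pm[OF x(1) h0] by auto
      then show False using x that by simp
    qed
    then show ?thesis using x by blast
  qed
  have pinj: "inj_on \<phi> H" using pb bij_betw_def by auto
  show "nat_iso (F'H H) F'Hm (F'H K) F'Hm" unfolding nat_iso_def
  proof (intro exI[of _ "\<lambda>V. \<phi>"] conjI allI impI)
    fix V :: "real set" assume "obj V"
    show "bij_betw \<phi> (F'H H V) (F'H K V)"
    proof (cases "0 \<in> V")
      case True
      have "inj_on \<phi> {h\<in>H. h > 0}" using pinj by (rule inj_on_subset) auto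
      moreover have "\<phi> ` {h\<in>H. h > 0} = {k\<in>K. k > 0}" using ppos pK psurj by auto
      ultimately show ?thesis using True unfolding F'H_def bij_betw_def by simp
    next
      case False then show ?thesis unfolding F'H_def by (simp add: bij_betw_def)
    qed
  next
    fix V W n x assume "obj V \<and> obj W \<and> n \<in> mor V W \<and> x \<in> F'H H V"
    then have "x \<in> H" unfolding F'H_def by (auto split: if_splits)
    then show "\<phi> (F'Hm V W n x) = F'Hm V W n (\<phi> x)" unfolding F'Hm_def using add_hom_nat[OF H pa] by blast
  qed
qed

theorem theorem3p9:
  shows "(\<forall>H. rank_one_real H \<longrightarrow> flat_continuous (FH H) FHm) \<and>
         (\<forall>H. rank_one_rat H \<longrightarrow> flat_continuous (F'H H) F'Hm) \<and>
         (\<forall>(F :: real set \<Rightarrow> 'a set) Fm. flat_continuous F Fm \<longrightarrow>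
             (\<exists>H. rank_one_real H \<and> nat_iso F Fm (FH H) FHm) \<or>
             (\<exists>H. rank_one_rat H \<and> nat_iso F Fm (F'H H) F'Hm)) \<and>
         (\<forall>H K. rank_one_real H \<and> rank_one_real K \<longrightarrow>
             (nat_iso (FH H) FHm (FH K) FHm \<longleftrightarrow> H = K)) \<and>
         (\<forall>H K. rank_one_rat H \<and> rank_one_rat K \<longrightarrow>
             (nat_iso (F'H H) F'Hm (F'H K) F'Hm \<longleftrightarrow> ord_group_iso H K)) \<and>
         (\<forall>H K. rank_one_real H \<and> rank_one_rat K \<longrightarrow>
             \<not> nat_iso (FH H) FHm (F'H K) F'Hm)"
proof (intro conjI allI impI)
  fix H :: "real set" assume "rank_one_real H" then show "flat_continuous (FH H) FHm" by (rule part1)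
next
  fix H :: "rat set" assume "rank_one_rat H" then show "flat_continuous (F'H H) F'Hm" by (rule part2)
next
  fix F :: "real set \<Rightarrow> 'a set" and Fm assume "flat_continuous F Fm"
  then have "fc F Fm" by (rule fc.intro)
  then show "(\<exists>H. rank_one_real H \<and> nat_iso F Fm (FH H) FHm) \<or>
             (\<exists>H. rank_one_rat H \<and> nat_iso F Fm (F'H H) F'Hm)" by (rule fc.classify)
next
  fix H K :: "real set" assume "rank_one_real H \<and> rank_one_real K"
  then show "nat_iso (FH H) FHm (FH K) FHm \<longleftrightarrow> H = K" using part4 by blast
next
  fix H K :: "rat set" assume "rank_one_rat H \<and> rank_one_rat K"
  then show "nat_iso (F'H H) F'Hm (F'H K) F'Hm \<longleftrightarrow> ord_group_iso H K" using part5 by blast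
next
  fix H :: "real set" and K :: "rat set" assume "rank_one_real H \<and> rank_one_rat K"
  then show "\<not> nat_iso (FH H) FHm (F'H K) F'Hm" using part6 by blast
qed

end
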